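(* Let $(M,g_{\alpha\beta})$ be a conformal completion à la Penrose of a physical space-time with arbitrary $\Lambda$, in the gauge of the context. Choose $p_0\in\mathscr{J}^+$ and a future null vector $\ell^\alpha$ at $p_0$, and let $\gamma$ be the corresponding null geodesic with affine parameter $\lambda$, $\lambda|_{p_0}=0$, normalised by $\ell^\mu N_\mu|_{p_0}=-1$. Assume $\Omega(\lambda)$ admits an expansion in powers of $\lambda$ near $0$, and write $\Omega_i:=\frac{d^i\Omega}{d\lambda^i}(0)$; note $\Omega(0)=0$ and $\Omega_1=-1$. Then, near $\lambda=0$, the physical Weyl tensor along $\gamma$ satisfies at $p_0$ $$(L^*\hat C)_{\alpha\beta\gamma\delta}=\lambda\, d^{(N)}_{\alpha\beta\gamma\delta}+\lambda^2 e^{(III)}_{\alpha\beta\gamma\delta}+\lambda^3 f^{(II/D)}_{\alpha\beta\gamma\delta}+\lambda^4 g^{(I)}_{\alpha\beta\gamma\delta}+\lambda^5 h^{(I)}_{\alpha\beta\gamma\delta}+O(\lambda^6),$$ where (suppressing indices): $$d^{(N)}=-C^{(4,0)},$$ $$e^{(III)}=C^{(3,0)}+\tfrac{\Omega_2}{2}C^{(4,0)}-C^{(4,1)},$$ $$f^{(II/D)}=-C^{(2,0)}-\Omega_2C^{(3,0)}+\tfrac{\Omega_3}{6}C^{(4,0)}+C^{(3,1)}-C^{(4,2)}+\tfrac{\Omega_2}{2}C^{(4,1)},$$ $$g^{(I)}=C^{(1,0)}+\tfrac{3\Omega_2}{2}C^{(2,0)}+\Big(\tfrac{\Omega_2^2}{4}-\tfrac{\Omega_3}{3}\Big)C^{(3,0)}+\tfrac{\Omega_4}{4!}C^{(4,0)}-C^{(2,1)}+C^{(3,2)}-C^{(4,3)}+\tfrac{\Omega_2}{2}C^{(4,2)}-\Omega_2C^{(3,1)}+\tfrac{\Omega_3}{6}C^{(4,1)},$$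 $$h^{(I)}=-C^{(0,0)}-2\Omega_2C^{(1,0)}+\Big(\tfrac{\Omega_3}{2}-\tfrac34\Omega_2^2\Big)C^{(2,0)}+\Big(\tfrac16\Omega_2\Omega_3-\tfrac{\Omega_4}{12}\Big)C^{(3,0)}+\tfrac{\Omega_5}{5!}C^{(4,0)}+C^{(1,1)}-C^{(2,2)}+C^{(3,3)}-C^{(4,4)}+\tfrac32\Omega_2C^{(2,1)}-\Omega_2C^{(3,2)}+\tfrac{\Omega_2}{2}C^{(4,3)}+\tfrac{\Omega_2^2}{4}C^{(3,1)}-\tfrac{\Omega_3}{3}C^{(3,1)}+\tfrac{\Omega_3}{6}C^{(4,2)}+\tfrac{\Omega_4}{4!}C^{(4,1)}.$$ These five tensors are Weyl-tensor candidates. In the null tetrad containing $\ell^\alpha$ and $k^\alpha$, $d^{(N)}$ has only $\psi_4$ possibly non-zero (type N or zero, with $\ell$ a fourfold principal null direction). Their generic Petrov types are N, III, II/D, I, I respectively.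
   Context: A conformal completion à la Penrose of a physical space-time $(\hat M,\hat g_{\alpha\beta})$ is a space-time-with-boundary $(M,g_{\alpha\beta})$ satisfying the following. $\hat M\subset M$ is the interior. There is a smooth function $\Omega$ on $M$ with $\Omega>0$ and $g_{\alpha\beta}=\Omega^2\hat g_{\alpha\beta}$ on $\hat M$. The conformal boundary is $\mathscr{J}=\{\Omega=0\}$, and $d\Omega\neq0$ on $\mathscr{J}$; $\mathscr{J}^+$ denotes its future component. The physical metric satisfies Einstein's equations with cosmological constant $\Lambda$. The signature is $(-,+,+,+)$. $\nabla$ and $\hat\nabla$ denote the Levi-Civita connections of $g$ and $\hat g$. Set $N_\alpha:=\nabla_\alpha\Omega$; indices are raised and lowered with $g$. The gauge is fixed so that $\nabla_\alpha N_\beta=0$ on $\mathscr{J}$, hence $N_\alpha N^\alpha=-\Lambda/3$ on $\mathscr{J}$. The physical Weyl tensor satisfies $\hat C_{\alpha\beta\gamma}{}^\delta=C_{\alpha\beta\gamma}{}^\delta$ on $\hat M$. The rescaled Weyl tensor $d$ is defined by $\Omega d_{\alpha\beta\gamma}{}^\delta=C_{\alpha\beta\gamma}{}^\delta$ and is assumed to extend smoothly to $\mathscr{J}$. A Weyl-tensor candidate is a tensor with all algebraic symmetries of a Weyl tensor (pair antisymmetry, pair-exchange symmetry, cyclic identity, tracelessness). The geodesic $\gamma:[-1,0]\to M$ is the null $g$-geodesic with: - $\gamma(0)=p_0$ and $\gamma([-1,0))\subset\hat M$; - tangent $\ell^\alpha$ and affine parameter $\lambda$. Write $\Omega(\lambda)=\Omega(\gamma(\lambda))$.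 At $p_0$ set: - $k^\alpha:=N^\alpha-\frac{\Lambda}{6}\ell^\alpha$, which is null with $k\cdot\ell=-1$; - $P^\alpha{}_\beta:=\delta^\alpha_\beta+k^\alpha\ell_\beta+\ell^\alpha k_\beta$. Use the null tetrad $(\ell,k,m,\bar m)$ with Newman–Penrose Weyl scalars labelled so that only $\psi_4\neq0$ means $\ell$ is a fourfold principal null direction, and only $\psi_0\neq0$ means $k$ is. Let $t$ and $\hat t$ be the $\nabla$- and $\hat\nabla$-parallel propagators of covectors along $\gamma$ ($t(\lambda_i,\lambda_j)$ maps from $\gamma(\lambda_j)$ to $\gamma(\lambda_i)$). Define $$L_\alpha{}^\beta:=t_\alpha{}^\mu(0,-1)\hat t_\mu{}^\rho(-1,\lambda)t_\rho{}^\beta(\lambda,0)$$ and, for a covariant tensor $T$ at $\gamma(\lambda)$, $$(L^*T)_{\alpha_1\dots\alpha_r}:=L_{\alpha_1}{}^{\nu_1}\cdots L_{\alpha_r}{}^{\nu_r}t_{\nu_1}{}^{\mu_1}(0,\lambda)\cdots t_{\nu_r}{}^{\mu_r}(0,\lambda)T_{\mu_1\dots\mu_r}.$$ The tensors $C^{(a)}$ ($a=0,\dots,4$) are the Weyl-tensor candidates at $p_0$ in the decomposition $$L^*\hat C=\sum_{a=0}^4\Omega^{5-a}C^{(a)}.$$ They are regular as $\lambda\to0$, and each $C^{(a)}$ has only the Weyl scalar $\psi_a$ possibly non-vanishing in the tetrad $(\ell,k,m,\bar m)$. Their leading term is $C^{(4,0)}_{\alpha\beta\gamma\delta}=\frac{4}{\Omega(-1)^2}d_{\mu\nu\rho\sigma}k^\nu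 k^\sigma P_{[\alpha}{}^\mu\ell_{\beta]}P_{[\gamma}{}^\rho\ell_{\delta]}$. Their expansions are $C^{(a)}=\sum_{i\ge0}C^{(a,i)}\lambda^i$. *)

theory Defs
  imports "HOL-Analysis.Analysis"
begin

text \<open>Tensors at the point p0, in components with respect to a fixed basis of the
  tangent space (indices range over the 4-element type 4).
  A covariant 4-tensor T has components T $ (a,b,c,d); a vector v has
  (contravariant) components v $ a; the metric g has components g $ a $ b.\<close>

type_synonym tensor4 = "real ^ (4 \<times> 4 \<times> 4 \<times> 4)"
type_synonym vec4 = "real ^ 4"
type_synonym metric4 = "real ^ 4 ^ 4"

definition gform :: "metric4 \<Rightarrow> vec4 \<Rightarrow> vec4 \<Rightarrow> real" where
  "gform g u v = (\<Sum>a\<in>UNIV. \<Sum>b\<in>UNIV. g $ a $ b * u $ a * v $ b)"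

definition weyl_candidate :: "metric4 \<Rightarrow> tensor4 \<Rightarrow> bool" where
  "weyl_candidate g T \<longleftrightarrow>
     (\<forall>a b c d. T $ (a,b,c,d) = - T $ (b,a,c,d)) \<and>
     (\<forall>a b c d. T $ (a,b,c,d) = - T $ (a,b,d,c)) \<and>
     (\<forall>a b c d. T $ (a,b,c,d) = T $ (c,d,a,b)) \<and>
     (\<forall>a b c d. T $ (a,b,c,d) + T $ (a,c,d,b) + T $ (a,d,b,c) = 0) \<and>
     (\<forall>b d. (\<Sum>a\<in>UNIV. \<Sum>c\<in>UNIV. matrix_inv g $ a $ c * T $ (a,b,c,d)) = 0)"

text \<open>Null tetrad (l, k, m, mbar) with m = (m1 + i m2)/sqrt 2, for the metric g of
  signature (-,+,+,+): l, k null, g(l,k) = -1, m1, m2 orthonormal spacelike and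
  orthogonal to l and k.\<close>
definition null_tetrad :: "metric4 \<Rightarrow> vec4 \<Rightarrow> vec4 \<Rightarrow> vec4 \<Rightarrow> vec4 \<Rightarrow> bool" where
  "null_tetrad g l k m1 m2 \<longleftrightarrow>
     gform g l l = 0 \<and> gform g k k = 0 \<and> gform g l k = -1 \<and>
     gform g l m1 = 0 \<and> gform g l m2 = 0 \<and> gform g k m1 = 0 \<and> gform g k m2 = 0 \<and>
     gform g m1 m1 = 1 \<and> gform g m2 m2 = 1 \<and> gform g m1 m2 = 0"

definition cvec :: "vec4 \<Rightarrow> 4 \<Rightarrow> complex" where
  "cvec v a = complex_of_real (v $ a)"

definition mvec :: "vec4 \<Rightarrow> vec4 \<Rightarrow> 4 \<Rightarrow> complex" where
  "mvec m1 m2 a = (complex_of_real (m1 $ a) + \<i> * complex_of_real (m2 $ a)) / complex_of_real (sqrt 2)"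

definition mbarvec :: "vec4 \<Rightarrow> vec4 \<Rightarrow> 4 \<Rightarrow> complex" where
  "mbarvec m1 m2 a = (complex_of_real (m1 $ a) - \<i> * complex_of_real (m2 $ a)) / complex_of_real (sqrt 2)"

definition contr4 :: "tensor4 \<Rightarrow> (4 \<Rightarrow> complex) \<Rightarrow> (4 \<Rightarrow> complex) \<Rightarrow> (4 \<Rightarrow> complex) \<Rightarrow> (4 \<Rightarrow> complex) \<Rightarrow> complex" where
  "contr4 T u v w x = (\<Sum>a\<in>UNIV. \<Sum>b\<in>UNIV. \<Sum>c\<in>UNIV. \<Sum>d\<in>UNIV.
       complex_of_real (T $ (a,b,c,d)) * u a * v b * w c * x d)"

text \<open>Newman--Penrose Weyl scalars in the tetrad (l,k,m,mbar), labelled so that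
  "only psi 4 non-zero" means l is a fourfold principal null direction and
  "only psi 0 non-zero" means k is.\<close>
definition NP_psi :: "vec4 \<Rightarrow> vec4 \<Rightarrow> vec4 \<Rightarrow> vec4 \<Rightarrow> tensor4 \<Rightarrow> nat \<Rightarrow> complex" where
  "NP_psi l k m1 m2 T j =
     (let L = cvec l; K = cvec k; m = mvec m1 m2; mb = mbarvec m1 m2 in
      if j = 0 then contr4 T L m L m
      else if j = 1 then contr4 T L K L m
      else if j = 2 then contr4 T L m mb K
      else if j = 3 then contr4 T L K mb K
      else contr4 T K mb K mb)"

definition Omd :: "(real \<Rightarrow> real) \<Rightarrow> nat \<Rightarrow> real" where
  "Omd Om i = (deriv ^^ i) Om 0"

text \<open>The five coefficient tensors; C a i stands for C^(a,i), W i for Omega_i.\<close>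
definition dN :: "(nat \<Rightarrow> nat \<Rightarrow> tensor4) \<Rightarrow> tensor4" where
  "dN C = - C 4 0"

definition eIII :: "(nat \<Rightarrow> nat \<Rightarrow> tensor4) \<Rightarrow> (nat \<Rightarrow> real) \<Rightarrow> tensor4" where
  "eIII C W = C 3 0 + (W 2 / 2) *\<^sub>R C 4 0 - C 4 1"

definition fIID :: "(nat \<Rightarrow> nat \<Rightarrow> tensor4) \<Rightarrow> (nat \<Rightarrow> real) \<Rightarrow> tensor4" where
  "fIID C W = - C 2 0 - W 2 *\<^sub>R C 3 0 + (W 3 / 6) *\<^sub>R C 4 0 + C 3 1 - C 4 2
              + (W 2 / 2) *\<^sub>R C 4 1"

definition gI :: "(nat \<Rightarrow> nat \<Rightarrow> tensor4) \<Rightarrow> (nat \<Rightarrow> real) \<Rightarrow> tensor4" where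
  "gI C W = C 1 0 + (3 * W 2 / 2) *\<^sub>R C 2 0 + ((W 2)\<^sup>2 / 4 - W 3 / 3) *\<^sub>R C 3 0
            + (W 4 / fact 4) *\<^sub>R C 4 0 - C 2 1 + C 3 2 - C 4 3 + (W 2 / 2) *\<^sub>R C 4 2
            - W 2 *\<^sub>R C 3 1 + (W 3 / 6) *\<^sub>R C 4 1"

definition hI :: "(nat \<Rightarrow> nat \<Rightarrow> tensor4) \<Rightarrow> (nat \<Rightarrow> real) \<Rightarrow> tensor4" where
  "hI C W = - C 0 0 - (2 * W 2) *\<^sub>R C 1 0 + (W 3 / 2 - 3 / 4 * (W 2)\<^sup>2) *\<^sub>R C 2 0
            + (1 / 6 * W 2 * W 3 - W 4 / 12) *\<^sub>R C 3 0 + (W 5 / fact 5) *\<^sub>R C 4 0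
            + C 1 1 - C 2 2 + C 3 3 - C 4 4 + (3 / 2 * W 2) *\<^sub>R C 2 1 - W 2 *\<^sub>R C 3 2
            + (W 2 / 2) *\<^sub>R C 4 3 + ((W 2)\<^sup>2 / 4) *\<^sub>R C 3 1 - (W 3 / 3) *\<^sub>R C 3 1
            + (W 3 / 6) *\<^sub>R C 4 2 + (W 4 / fact 4) *\<^sub>R C 4 1"

end

theory Submission
  imports Defs
begin


lemma powser_a0_zero:
  fixes a :: "nat \<Rightarrow> real"
  assumes s: "0 < s" and sm: "\<And>x. \<bar>x\<bar> < s \<Longrightarrow> (\<lambda>i. a i * x ^ i) sums f x"
    and z: "\<And>x. -s < x \<Longrightarrow> x < 0 \<Longrightarrow> f x = 0"
  shows "a 0 = 0"
proof -
  have "(f \<longlongrightarrow> a 0) (at 0)" using powser_limit_0[OF s, of a f] sm by auto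
  hence L: "(f \<longlongrightarrow> a 0) (at_left 0)" by (rule filterlim_mono) (auto simp: at_le)
  have "eventually (\<lambda>x. x \<in> {-s<..<0}) (at_left (0::real))" using s by (intro eventually_at_left_real) auto
  hence "eventually (\<lambda>x. f x = 0) (at_left (0::real))" by eventually_elim (auto intro: z)
  hence "((\<lambda>_. 0) \<longlongrightarrow> a 0) (at_left (0::real))" using L by (rule Lim_transform_eventually[rotated])
  thus ?thesis using tendsto_unique[OF trivial_limit_at_left_real] tendsto_const by (metis trivial_limit_at_left_real tendsto_const_iff)
qed

lemma powser_coeff_zero:
  fixes a :: "nat \<Rightarrow> real"
  assumes s: "0 < s" and sm: "\<And>x. \<bar>x\<bar> < s \<Longrightarrow> (\<lambda>i. a i * x ^ i) sums f x"
    and z: "\<And>x. -s < x \<Longrightarrow> x < 0 \<Longrightarrow> f x = 0"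
  shows "a n = 0"
  using sm z
proof (induction n arbitrary: a f)
  case 0
  then show ?case using powser_a0_zero[OF s] by blast
next
  case (Suc n)
  have a0: "a 0 = 0" using powser_a0_zero[OF s] Suc.prems by blast
  define g where "g x = (if x = 0 then a 1 else f x / x)" for x
  have "(\<lambda>i. (a \<circ> Suc) i * x ^ i) sums g x" if "\<bar>x\<bar> < s" for x
  proof (cases "x = 0")
    case True
    then show ?thesis using powser_sums_zero[of "a \<circ> Suc"] by (simp add: g_def)
  next
    case False
    have "(\<lambda>i. a (i + 1) * x ^ (i + 1)) sums (f x - (\<Sum>i<1. a i * x ^ i))"
      using sums_split_initial_segment[OF Suc.prems(1)[OF that]] .
    hence "(\<lambda>i. a (Suc i) * x ^ (Suc i)) sums f x" using a0 by simp
    hence "(\<lambda>i. a (Suc i) * x ^ (Suc i) / x) sums (f x / x)" by (rule sums_divide)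
    then show ?thesis using False by (simp add: g_def)
  qed
  moreover have "g x = 0" if "-s < x" "x < 0" for x using Suc.prems(2)[OF that] that by (simp add: g_def)
  ultimately have "(a \<circ> Suc) n = 0" using Suc.IH[of "a \<circ> Suc" g] by auto
  then show ?case by simp
qed

lemma coeff_lin_zero:
  fixes \<phi> :: "tensor4 \<Rightarrow> real" and c :: "nat \<Rightarrow> tensor4"
  assumes lin: "linear \<phi>" and s: "0 < s"
    and sm: "\<And>x. \<bar>x\<bar> < s \<Longrightarrow> (\<lambda>i. x ^ i *\<^sub>R c i) sums F x"
    and z: "\<And>x. -s < x \<Longrightarrow> x < 0 \<Longrightarrow> \<phi> (F x) = 0"
  shows "\<phi> (c n) = 0"
proof -
  have bl: "bounded_linear \<phi>" using lin linear_conv_bounded_linear by blast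
  have "(\<lambda>i. \<phi> (c i) * x ^ i) sums \<phi> (F x)" if "\<bar>x\<bar> < s" for x
    using bounded_linear.sums[OF bl sm[OF that]] linear_scale[OF lin] by (simp add: mult.commute)
  thus ?thesis using powser_coeff_zero[OF s, of "\<lambda>i. \<phi> (c i)" "\<lambda>x. \<phi> (F x)"] z by blast
qed




lemma weyl_D:
  assumes "weyl_candidate g X"
  shows "X $ (a,b,c,d) = - X $ (b,a,c,d)" "X $ (a,b,c,d) = - X $ (a,b,d,c)"
    "X $ (a,b,c,d) = X $ (c,d,a,b)" "X $ (a,b,c,d) + X $ (a,c,d,b) + X $ (a,d,b,c) = 0"
    "(\<Sum>a\<in>UNIV. \<Sum>c\<in>UNIV. matrix_inv g $ a $ c * X $ (a,b,c,d)) = 0"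
  using assms unfolding weyl_candidate_def by blast+

lemma weyl_I:
  assumes "\<And>a b c d. X $ (a,b,c,d) = - X $ (b,a,c,d)" "\<And>a b c d. X $ (a,b,c,d) = - X $ (a,b,d,c)"
    "\<And>a b c d. X $ (a,b,c,d) = X $ (c,d,a,b)" "\<And>a b c d. X $ (a,b,c,d) + X $ (a,c,d,b) + X $ (a,d,b,c) = 0"
    "\<And>b d. (\<Sum>a\<in>UNIV. \<Sum>c\<in>UNIV. matrix_inv g $ a $ c * X $ (a,b,c,d)) = 0"
  shows "weyl_candidate g X"
  using assms unfolding weyl_candidate_def by blast

lemma weyl_add:
  assumes X: "weyl_candidate g X" and Y: "weyl_candidate g Y"
  shows "weyl_candidate g (X + Y)"
proof (rule weyl_I)
  fix a b c d
  show "(X + Y) $ (a,b,c,d) = - (X + Y) $ (b,a,c,d)"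
    using weyl_D(1)[OF X, of a b c d] weyl_D(1)[OF Y, of a b c d] by simp
  show "(X + Y) $ (a,b,c,d) = - (X + Y) $ (a,b,d,c)"
    using weyl_D(2)[OF X, of a b c d] weyl_D(2)[OF Y, of a b c d] by simp
  show "(X + Y) $ (a,b,c,d) = (X + Y) $ (c,d,a,b)"
    using weyl_D(3)[OF X, of a b c d] weyl_D(3)[OF Y, of a b c d] by simp
  show "(X + Y) $ (a,b,c,d) + (X + Y) $ (a,c,d,b) + (X + Y) $ (a,d,b,c) = 0"
    using weyl_D(4)[OF X, of a b c d] weyl_D(4)[OF Y, of a b c d] by simp
next
  fix b d
  show "(\<Sum>a\<in>UNIV. \<Sum>c\<in>UNIV. matrix_inv g $ a $ c * (X + Y) $ (a,b,c,d)) = 0"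
    using weyl_D(5)[OF X, of b d] weyl_D(5)[OF Y, of b d]
    by (simp only: vector_add_component distrib_left sum.distrib)
qed

lemma weyl_scale:
  assumes X: "weyl_candidate g X"
  shows "weyl_candidate g (r *\<^sub>R X)"
proof (rule weyl_I)
  fix a b c d
  show "(r *\<^sub>R X) $ (a,b,c,d) = - (r *\<^sub>R X) $ (b,a,c,d)"
    using weyl_D(1)[OF X, of a b c d] by simp
  show "(r *\<^sub>R X) $ (a,b,c,d) = - (r *\<^sub>R X) $ (a,b,d,c)"
    using weyl_D(2)[OF X, of a b c d] by simp
  show "(r *\<^sub>R X) $ (a,b,c,d) = (r *\<^sub>R X) $ (c,d,a,b)"
    using weyl_D(3)[OF X, of a b c d] by simp
  show "(r *\<^sub>R X) $ (a,b,c,d) + (r *\<^sub>R X) $ (a,c,d,b) + (r *\<^sub>R X) $ (a,d,b,c) = 0"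
    using weyl_D(4)[OF X, of a b c d] by (simp add: distrib_left[symmetric])
next
  fix b d
  have "(\<Sum>a\<in>UNIV. \<Sum>c\<in>UNIV. matrix_inv g $ a $ c * (r *\<^sub>R X) $ (a,b,c,d))
      = r * (\<Sum>a\<in>UNIV. \<Sum>c\<in>UNIV. matrix_inv g $ a $ c * X $ (a,b,c,d))"
    by (simp only: vector_scaleR_component sum_distrib_left) (simp add: mult_ac)
  then show "(\<Sum>a\<in>UNIV. \<Sum>c\<in>UNIV. matrix_inv g $ a $ c * (r *\<^sub>R X) $ (a,b,c,d)) = 0"
    using weyl_D(5)[OF X, of b d] by simp
qed

lemma weyl_neg: "weyl_candidate g X \<Longrightarrow> weyl_candidate g (- X)"
  using weyl_scale[of g X "-1"] by simp

lemma weyl_diff: "weyl_candidate g X \<Longrightarrow> weyl_candidate g Y \<Longrightarrow> weyl_candidate g (X - Y)"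
  using weyl_add[of g X "-Y"] weyl_neg[of g Y] by simp


lemma contr4_add: "contr4 (X + Y) u v w x = contr4 X u v w x + contr4 Y u v w x"
  unfolding contr4_def by (simp add: distrib_right sum.distrib)

lemma contr4_scale: "contr4 (c *\<^sub>R X) u v w x = complex_of_real c * contr4 X u v w x"
  unfolding contr4_def by (simp add: mult.assoc sum_distrib_left)

lemma NP_add: "NP_psi l k m1 m2 (X + Y) j = NP_psi l k m1 m2 X j + NP_psi l k m1 m2 Y j"
  unfolding NP_psi_def Let_def by (simp add: contr4_add)

lemma NP_scale: "NP_psi l k m1 m2 (c *\<^sub>R X) j = complex_of_real c * NP_psi l k m1 m2 X j"
  unfolding NP_psi_def Let_def by (simp add: contr4_scale)

lemma NP_neg: "NP_psi l k m1 m2 (- X) j = - NP_psi l k m1 m2 X j"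
  using NP_scale[of l k m1 m2 "-1" X j] by simp

lemma NP_diff: "NP_psi l k m1 m2 (X - Y) j = NP_psi l k m1 m2 X j - NP_psi l k m1 m2 Y j"
  using NP_add[of l k m1 m2 X "-Y" j] NP_neg[of l k m1 m2 Y j] by simp
lemma weyl_coeffs:
  assumes s: "0 < s" and sm: "\<And>x. \<bar>x\<bar> < s \<Longrightarrow> (\<lambda>i. x ^ i *\<^sub>R c i) sums F x"
    and z: "\<And>x. -s < x \<Longrightarrow> x < 0 \<Longrightarrow> weyl_candidate g (F x)"
  shows "weyl_candidate g (c n)"
proof -
  have 1: "(c n) $ (a,b,cc,d) + (c n) $ (b,a,cc,d) = 0" for a b cc d
  proof (rule coeff_lin_zero[OF _ s sm])
    show "linear (\<lambda>T::tensor4. T $ (a,b,cc,d) + T $ (b,a,cc,d))" by (simp add: linear_iff algebra_simps)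
    fix x assume "-s < x" "x < 0"
    from weyl_D(1)[OF z[OF this], of a b cc d] show "F x $ (a,b,cc,d) + F x $ (b,a,cc,d) = 0" by linarith
  qed
  have 2: "(c n) $ (a,b,cc,d) + (c n) $ (a,b,d,cc) = 0" for a b cc d
  proof (rule coeff_lin_zero[OF _ s sm])
    show "linear (\<lambda>T::tensor4. T $ (a,b,cc,d) + T $ (a,b,d,cc))" by (simp add: linear_iff algebra_simps)
    fix x assume "-s < x" "x < 0"
    from weyl_D(2)[OF z[OF this], of a b cc d] show "F x $ (a,b,cc,d) + F x $ (a,b,d,cc) = 0" by linarith
  qed
  have 3: "(c n) $ (a,b,cc,d) - (c n) $ (cc,d,a,b) = 0" for a b cc d
  proof (rule coeff_lin_zero[OF _ s sm])
    show "linear (\<lambda>T::tensor4. T $ (a,b,cc,d) - T $ (cc,d,a,b))" by (simp add: linear_iff algebra_simps)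
    fix x assume "-s < x" "x < 0"
    from weyl_D(3)[OF z[OF this], of a b cc d] show "F x $ (a,b,cc,d) - F x $ (cc,d,a,b) = 0" by linarith
  qed
  have 4: "(c n) $ (a,b,cc,d) + (c n) $ (a,cc,d,b) + (c n) $ (a,d,b,cc) = 0" for a b cc d
  proof (rule coeff_lin_zero[OF _ s sm])
    show "linear (\<lambda>T::tensor4. T $ (a,b,cc,d) + T $ (a,cc,d,b) + T $ (a,d,b,cc))" by (simp add: linear_iff algebra_simps)
    fix x assume "-s < x" "x < 0"
    from weyl_D(4)[OF z[OF this], of a b cc d] show "F x $ (a,b,cc,d) + F x $ (a,cc,d,b) + F x $ (a,d,b,cc) = 0" .
  qed
  have 5: "(\<Sum>a\<in>UNIV. \<Sum>cc\<in>UNIV. matrix_inv g $ a $ cc * (c n) $ (a,b,cc,d)) = 0" for b d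
  proof (rule coeff_lin_zero[OF _ s sm])
    show "linear (\<lambda>T::tensor4. (\<Sum>a\<in>UNIV. \<Sum>cc\<in>UNIV. matrix_inv g $ a $ cc * T $ (a,b,cc,d)))"
      unfolding linear_iff by (simp add: distrib_left sum.distrib sum_distrib_left mult_ac)
    fix x assume "-s < x" "x < 0"
    from weyl_D(5)[OF z[OF this], of b d] show "(\<Sum>a\<in>UNIV. \<Sum>cc\<in>UNIV. matrix_inv g $ a $ cc * F x $ (a,b,cc,d)) = 0" .
  qed
  show ?thesis
  proof (rule weyl_I)
    fix a b cc d
    show "c n $ (a, b, cc, d) = - c n $ (b, a, cc, d)" using 1[of a b cc d] by linarith
    show "c n $ (a, b, cc, d) = - c n $ (a, b, d, cc)" using 2[of a b cc d] by linarith
    show "c n $ (a, b, cc, d) = c n $ (cc, d, a, b)" using 3[of a b cc d] by linarith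
    show "c n $ (a, b, cc, d) + c n $ (a, cc, d, b) + c n $ (a, d, b, cc) = 0" using 4 .
  next
    fix b d show "(\<Sum>a\<in>UNIV. \<Sum>cc\<in>UNIV. matrix_inv g $ a $ cc * c n $ (a, b, cc, d)) = 0" using 5 .
  qed
qed

lemma NP_coeffs:
  assumes s: "0 < s" and sm: "\<And>x. \<bar>x\<bar> < s \<Longrightarrow> (\<lambda>i. x ^ i *\<^sub>R c i) sums F x"
    and z: "\<And>x. -s < x \<Longrightarrow> x < 0 \<Longrightarrow> NP_psi l k m1 m2 (F x) j = 0"
  shows "NP_psi l k m1 m2 (c n) j = 0"
proof -
  have "Re (NP_psi l k m1 m2 (c n) j) = 0"
  proof (rule coeff_lin_zero[OF _ s sm])
    show "linear (\<lambda>T. Re (NP_psi l k m1 m2 T j))" by (simp add: linear_iff NP_add NP_scale)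
  qed (use z in auto)
  moreover have "Im (NP_psi l k m1 m2 (c n) j) = 0"
  proof (rule coeff_lin_zero[OF _ s sm])
    show "linear (\<lambda>T. Im (NP_psi l k m1 m2 T j))" by (simp add: linear_iff NP_add NP_scale)
  qed (use z in auto)
  ultimately show ?thesis by (simp add: complex_eq_iff)
qed




lemma diffs_iter: "fact m * (diffs ^^ n) c m = fact (m + n) * (c (m + n) :: real)"
proof (induction n arbitrary: m)
  case 0 then show ?case by simp
next
  case (Suc n)
  have "fact m * (diffs ^^ Suc n) c m = fact m * (of_nat (Suc m) * (diffs ^^ n) c (Suc m))"
    by (simp add: diffs_def)
  also have "\<dots> = fact (Suc m) * (diffs ^^ n) c (Suc m)" by (simp add: algebra_simps)
  also have "\<dots> = fact (Suc m + n) * c (Suc m + n)" by (rule Suc.IH)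
  finally show ?case by simp
qed

lemma higher_deriv_powser:
  fixes c :: "nat \<Rightarrow> real"
  assumes r: "0 < r" and sm: "\<And>x. \<bar>x\<bar> < r \<Longrightarrow> (\<lambda>i. c i * x ^ i) sums f x"
  shows "(deriv ^^ n) f 0 = fact n * c n"
proof -
  have S: "\<forall>x. \<bar>x\<bar> < r \<longrightarrow> summable (\<lambda>i. (diffs ^^ n) c i * x ^ i)" for n
  proof (induction n)
    case 0 then show ?case using sm sums_summable by fastforce
  next
    case (Suc n)
    show ?case
    proof (intro allI impI)
      fix x :: real assume "\<bar>x\<bar> < r"
      then show "summable (\<lambda>i. (diffs ^^ Suc n) c i * x ^ i)"
        using termdiff_converges[of x r "(diffs ^^ n) c"] Suc.IH by simp
    qed
  qed
  have opn: "open {z::real. \<bar>z\<bar> < r}" using open_ball[of "0::real" r] by (simp add: ball_def dist_real_def)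
  have D: "\<forall>x. \<bar>x\<bar> < r \<longrightarrow> (deriv ^^ n) f x = (\<Sum>i. (diffs ^^ n) c i * x ^ i)" for n
  proof (induction n)
    case 0 then show ?case using sm sums_unique by fastforce
  next
    case (Suc n)
    show ?case
    proof (intro allI impI)
      fix x :: real assume x: "\<bar>x\<bar> < r"
      have "((\<lambda>z. \<Sum>i. (diffs ^^ n) c i * z ^ i) has_field_derivative
              (\<Sum>i. diffs ((diffs ^^ n) c) i * x ^ i)) (at x)"
        using termdiffs_strong'[of r "(diffs ^^ n) c" x] S[of n] x by simp
      hence "((deriv ^^ n) f has_field_derivative
              (\<Sum>i. diffs ((diffs ^^ n) c) i * x ^ i)) (at x)"
        by (rule has_field_derivative_transform_within_open[where S = "{z. \<bar>z\<bar> < r}"])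
           (use x Suc.IH opn in auto)
      hence "deriv ((deriv ^^ n) f) x = (\<Sum>i. diffs ((diffs ^^ n) c) i * x ^ i)"
        by (rule DERIV_imp_deriv)
      then show "(deriv ^^ Suc n) f x = (\<Sum>i. (diffs ^^ Suc n) c i * x ^ i)" by simp
    qed
  qed
  have "(deriv ^^ n) f 0 = (\<Sum>i. (diffs ^^ n) c i * 0 ^ i)" using D r by simp
  also have "\<dots> = (diffs ^^ n) c 0" using powser_sums_zero sums_unique by metis
  also have "\<dots> = fact n * c n" using diffs_iter[of 0 n c] by simp
  finally show ?thesis .
qed

definition conv :: "(nat \<Rightarrow> real) \<Rightarrow> (nat \<Rightarrow> real) \<Rightarrow> nat \<Rightarrow> real" where
  "conv a b n = (\<Sum>i\<le>n. a i * b (n - i))"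

lemma conv_sums:
  assumes sa: "\<And>x. \<bar>x\<bar> < r \<Longrightarrow> (\<lambda>i. a i * x ^ i) sums A x"
    and sb: "\<And>x. \<bar>x\<bar> < r \<Longrightarrow> (\<lambda>i. b i * x ^ i) sums B x"
    and x: "\<bar>x\<bar> < r"
  shows "(\<lambda>n. conv a b n * x ^ n) sums (A x * B x)"
proof -
  define s where "s = (\<bar>x\<bar> + r) / 2"
  have s1: "\<bar>x\<bar> < s" and s2: "\<bar>s\<bar> < r" using x by (auto simp: s_def)
  have na: "summable (\<lambda>i. norm (a i * x ^ i))"
    using powser_insidea[of a s x] sums_summable[OF sa[OF s2]] s1 by auto
  have nb: "summable (\<lambda>i. norm (b i * x ^ i))"
    using powser_insidea[of b s x] sums_summable[OF sb[OF s2]] s1 by auto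
  have "(\<lambda>k. \<Sum>i\<le>k. (a i * x ^ i) * (b (k - i) * x ^ (k - i))) sums
        ((\<Sum>i. a i * x ^ i) * (\<Sum>i. b i * x ^ i))"
    by (rule Cauchy_product_sums[OF na nb])
  moreover have "(\<Sum>i\<le>k. (a i * x ^ i) * (b (k - i) * x ^ (k - i))) = conv a b k * x ^ k" for k
  proof -
    have "(\<Sum>i\<le>k. (a i * x ^ i) * (b (k - i) * x ^ (k - i))) = (\<Sum>i\<le>k. (a i * b (k - i)) * x ^ k)"
    proof (rule sum.cong[OF refl])
      fix i assume "i \<in> {..k}"
      hence "x ^ i * x ^ (k - i) = x ^ k" by (simp flip: power_add)
      thus "(a i * x ^ i) * (b (k - i) * x ^ (k - i)) = (a i * b (k - i)) * x ^ k"
        by (metis mult.assoc mult.left_commute)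
    qed
    thus ?thesis by (simp add: conv_def sum_distrib_right)
  qed
  ultimately show ?thesis using sums_unique[OF sa[OF x]] sums_unique[OF sb[OF x]] by simp
qed

primrec pw :: "(nat \<Rightarrow> real) \<Rightarrow> nat \<Rightarrow> nat \<Rightarrow> real" where
  "pw w 0 = (\<lambda>n. if n = 0 then 1 else 0)"
| "pw w (Suc k) = conv w (pw w k)"

lemma pw_sums:
  assumes sw: "\<And>x. \<bar>x\<bar> < r \<Longrightarrow> (\<lambda>i. w i * x ^ i) sums W x"
  shows "\<bar>x\<bar> < r \<Longrightarrow> (\<lambda>n. pw w k n * x ^ n) sums (W x ^ k)"
proof (induction k arbitrary: x)
  case 0
  have "(\<lambda>n. if n = 0 then x ^ n else 0) sums x ^ 0" by (rule sums_single)
  moreover have "(\<lambda>n. pw w 0 n * x ^ n) = (\<lambda>n. if n = 0 then x ^ n else 0)" by auto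
  ultimately show ?case by simp
next
  case (Suc k)
  have "(\<lambda>n. conv w (pw w k) n * x ^ n) sums (W x * W x ^ k)"
    by (rule conv_sums[where r=r]) (use sw Suc in auto)
  then show ?case by simp
qed

lemma powser_rem6:
  fixes e :: "nat \<Rightarrow> real"
  assumes r: "0 < r" and sm: "\<And>x. \<bar>x\<bar> < r \<Longrightarrow> (\<lambda>n. e n * x ^ n) sums G x"
  shows "\<exists>K. \<forall>x. \<bar>x\<bar> \<le> r / 2 \<longrightarrow> \<bar>G x - (\<Sum>n<6. e n * x ^ n)\<bar> \<le> K * \<bar>x\<bar> ^ 6"
proof -
  define \<rho> where "\<rho> = r / 2"
  have \<rho>: "0 < \<rho>" using r by (simp add: \<rho>_def)
  have s1: "summable (\<lambda>n. norm (e n * \<rho> ^ n))"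
    using powser_insidea[of e "3 * r / 4" \<rho>] sums_summable[OF sm[of "3 * r / 4"]] r
    by (auto simp: \<rho>_def)
  have "summable (\<lambda>n. \<bar>e (n + 6)\<bar> * \<rho> ^ (n + 6))"
    using summable_ignore_initial_segment[OF s1, of 6] \<rho> by (simp add: abs_mult)
  hence "summable (\<lambda>n. \<bar>e (n + 6)\<bar> * \<rho> ^ (n + 6) / \<rho> ^ 6)" by (rule summable_divide)
  hence sK: "summable (\<lambda>n. \<bar>e (n + 6)\<bar> * \<rho> ^ n)"
    using \<rho> by (simp add: power_add)
  define K where "K = (\<Sum>n. \<bar>e (n + 6)\<bar> * \<rho> ^ n)"
  show ?thesis
  proof (intro exI allI impI)
    fix x assume x: "\<bar>x\<bar> \<le> r / 2"
    hence xr: "\<bar>x\<bar> < r" using r by simp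
    have sp: "(\<lambda>n. e (n + 6) * x ^ (n + 6)) sums (G x - (\<Sum>n<6. e n * x ^ n))"
      using sums_split_initial_segment[OF sm[OF xr]] .
    have bd: "norm (e (n + 6) * x ^ (n + 6)) \<le> \<bar>x\<bar> ^ 6 * (\<bar>e (n + 6)\<bar> * \<rho> ^ n)" for n
    proof -
      have "\<bar>x\<bar> ^ n \<le> \<rho> ^ n" using x by (intro power_mono) (auto simp: \<rho>_def)
      hence "\<bar>e (n + 6)\<bar> * \<bar>x\<bar> ^ n \<le> \<bar>e (n + 6)\<bar> * \<rho> ^ n" by (rule mult_left_mono) simp
      hence "\<bar>x\<bar> ^ 6 * (\<bar>e (n + 6)\<bar> * \<bar>x\<bar> ^ n) \<le> \<bar>x\<bar> ^ 6 * (\<bar>e (n + 6)\<bar> * \<rho> ^ n)"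
        by (rule mult_left_mono) simp
      thus ?thesis by (simp add: abs_mult power_abs power_add mult_ac)
    qed
    have "(\<lambda>n. \<bar>x\<bar> ^ 6 * (\<bar>e (n + 6)\<bar> * \<rho> ^ n)) sums (\<bar>x\<bar> ^ 6 * K)"
      unfolding K_def by (rule sums_mult) (rule summable_sums[OF sK])
    from norm_sums_le[OF sp this bd] show "\<bar>G x - (\<Sum>n<6. e n * x ^ n)\<bar> \<le> K * \<bar>x\<bar> ^ 6"
      by (simp add: mult.commute)
  qed
qed




lemma coeffs5:
  fixes w :: "nat \<Rightarrow> real" and c :: "nat \<Rightarrow> nat \<Rightarrow> real" and W :: "nat \<Rightarrow> real"
  assumes w0: "w 0 = 0" and w1: "w 1 = -1" and W: "\<And>i. W i = fact i * w i"
  shows "(\<Sum>a\<le>4. conv (pw w (5-a)) (c a) 0) = 0"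
    "(\<Sum>a\<le>4. conv (pw w (5-a)) (c a) 1) = - c 4 0"
    "(\<Sum>a\<le>4. conv (pw w (5-a)) (c a) 2) = c 3 0 + (W 2 / 2) * c 4 0 - c 4 1"
    "(\<Sum>a\<le>4. conv (pw w (5-a)) (c a) 3) = 
     - c 2 0 - W 2 * c 3 0 + (W 3 / 6) * c 4 0 + c 3 1 - c 4 2 + (W 2 / 2) * c 4 1"
    "(\<Sum>a\<le>4. conv (pw w (5-a)) (c a) 4) = 
     c 1 0 + (3 * W 2 / 2) * c 2 0 + ((W 2)\<^sup>2 / 4 - W 3 / 3) * c 3 0
            + (W 4 / fact 4) * c 4 0 - c 2 1 + c 3 2 - c 4 3 + (W 2 / 2) * c 4 2
            - W 2 * c 3 1 + (W 3 / 6) * c 4 1"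
    "(\<Sum>a\<le>4. conv (pw w (5-a)) (c a) 5) = 
     - c 0 0 - (2 * W 2) * c 1 0 + (W 3 / 2 - 3 / 4 * (W 2)\<^sup>2) * c 2 0
            + (1 / 6 * W 2 * W 3 - W 4 / 12) * c 3 0 + (W 5 / fact 5) * c 4 0
            + c 1 1 - c 2 2 + c 3 3 - c 4 4 + (3 / 2 * W 2) * c 2 1 - W 2 * c 3 2
            + (W 2 / 2) * c 4 3 + ((W 2)\<^sup>2 / 4) * c 3 1 - (W 3 / 3) * c 3 1
            + (W 3 / 6) * c 4 2 + (W 4 / fact 4) * c 4 1"
  using w0 w1 by (simp_all add: W conv_def eval_nat_numeral sum.atMost_Suc_shift algebra_simps power2_eq_square)




theorem mainTheorem3:
  fixes g :: metric4 and l k m1 m2 :: vec4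
    and Om :: "real \<Rightarrow> real" and Omc :: "nat \<Rightarrow> real"
    and LC :: "real \<Rightarrow> tensor4"
    and Cf :: "nat \<Rightarrow> real \<Rightarrow> tensor4" and C :: "nat \<Rightarrow> nat \<Rightarrow> tensor4"
    and r :: real
  assumes g_sym: "\<forall>a b. g $ a $ b = g $ b $ a"
    and g_inv: "invertible g"
    and tetrad: "null_tetrad g l k m1 m2"
    and r_pos: "r > 0"
    and Om_series: "\<forall>t. \<bar>t\<bar> < r \<longrightarrow> (\<lambda>i. Omc i * t ^ i) sums Om t"
    and Om0: "Om 0 = 0"
    and Om1: "Omd Om 1 = -1"
    and C_series: "\<forall>a\<le>4. \<forall>t. \<bar>t\<bar> < r \<longrightarrow> (\<lambda>i. t ^ i *\<^sub>R C a i) sums Cf a t"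
    and decomp: "\<forall>t. -r < t \<and> t < 0 \<longrightarrow>
                   LC t = (\<Sum>a\<le>4. Om t ^ (5 - a) *\<^sub>R Cf a t)"
    and C_weyl: "\<forall>a\<le>4. \<forall>t. -r < t \<and> t < 0 \<longrightarrow> weyl_candidate g (Cf a t)"
    and C_psi: "\<forall>a\<le>4. \<forall>t. -r < t \<and> t < 0 \<longrightarrow>
                  (\<forall>j\<le>4. j \<noteq> a \<longrightarrow> NP_psi l k m1 m2 (Cf a t) j = 0)"
  shows "(\<exists>K \<delta>. \<delta> > 0 \<and> (\<forall>t. -\<delta> < t \<and> t < 0 \<longrightarrow>
            norm (LC t - (t *\<^sub>R dN C + t\<^sup>2 *\<^sub>R eIII C (Omd Om)
                          + t ^ 3 *\<^sub>R fIID C (Omd Om) + t ^ 4 *\<^sub>R gI C (Omd Om)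
                          + t ^ 5 *\<^sub>R hI C (Omd Om)))
              \<le> K * \<bar>t\<bar> ^ 6))
       \<and> weyl_candidate g (dN C) \<and> weyl_candidate g (eIII C (Omd Om))
       \<and> weyl_candidate g (fIID C (Omd Om)) \<and> weyl_candidate g (gI C (Omd Om))
       \<and> weyl_candidate g (hI C (Omd Om))
       \<and> (\<forall>j<4. NP_psi l k m1 m2 (dN C) j = 0)
       \<and> (\<forall>j<3. NP_psi l k m1 m2 (eIII C (Omd Om)) j = 0)
       \<and> (\<forall>j<2. NP_psi l k m1 m2 (fIID C (Omd Om)) j = 0)
       \<and> NP_psi l k m1 m2 (gI C (Omd Om)) 0 = 0"
proof -
  have Osm: "\<And>t. \<bar>t\<bar> < r \<Longrightarrow> (\<lambda>i. Omc i * t ^ i) sums Om t" using Om_series by blast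
  have Csm: "\<And>a t. a \<le> 4 \<Longrightarrow> \<bar>t\<bar> < r \<Longrightarrow> (\<lambda>i. t ^ i *\<^sub>R C a i) sums Cf a t" using C_series by blast
  have w0: "Omc 0 = 0" using Osm[of 0] r_pos Om0 by simp
  have Wd: "\<And>i. Omd Om i = fact i * Omc i"
    unfolding Omd_def by (rule higher_deriv_powser[OF r_pos Osm])
  have w1: "Omc 1 = -1" using Om1 Wd[of 1] by simp
  have Wc: "\<And>a i. a \<le> 4 \<Longrightarrow> weyl_candidate g (C a i)"
  proof -
    fix a i assume a: "a \<le> (4::nat)"
    show "weyl_candidate g (C a i)"
      by (rule weyl_coeffs[OF r_pos, where F = "Cf a"]) (use a Csm C_weyl in auto)
  qed
  have Pc: "\<And>a i j. a \<le> 4 \<Longrightarrow> j \<le> 4 \<Longrightarrow> j \<noteq> a \<Longrightarrow> NP_psi l k m1 m2 (C a i) j = 0"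
  proof -
    fix a i j assume a: "a \<le> (4::nat)" and j: "j \<le> 4" "j \<noteq> a"
    show "NP_psi l k m1 m2 (C a i) j = 0"
      by (rule NP_coeffs[OF r_pos, where F = "Cf a"]) (use a j Csm C_psi in auto)
  qed
  have weyls: "weyl_candidate g (dN C) \<and> weyl_candidate g (eIII C (Omd Om))
       \<and> weyl_candidate g (fIID C (Omd Om)) \<and> weyl_candidate g (gI C (Omd Om))
       \<and> weyl_candidate g (hI C (Omd Om))"
    unfolding dN_def eIII_def fIID_def gI_def hI_def
    by (intro conjI weyl_add weyl_diff weyl_scale weyl_neg Wc) simp_all
  have nps: "(\<forall>j<4. NP_psi l k m1 m2 (dN C) j = 0)
       \<and> (\<forall>j<3. NP_psi l k m1 m2 (eIII C (Omd Om)) j = 0)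
       \<and> (\<forall>j<2. NP_psi l k m1 m2 (fIID C (Omd Om)) j = 0)
       \<and> NP_psi l k m1 m2 (gI C (Omd Om)) 0 = 0"
    unfolding dN_def eIII_def fIID_def gI_def
    by (simp add: NP_add NP_diff NP_scale NP_neg Pc)
  define P where "P t = t *\<^sub>R dN C + t\<^sup>2 *\<^sub>R eIII C (Omd Om)
                          + t ^ 3 *\<^sub>R fIID C (Omd Om) + t ^ 4 *\<^sub>R gI C (Omd Om)
                          + t ^ 5 *\<^sub>R hI C (Omd Om)" for t
  have comp: "\<exists>K. \<forall>t. -(r/2) < t \<and> t < 0 \<longrightarrow> \<bar>(LC t - P t) $ idx\<bar> \<le> K * \<bar>t\<bar> ^ 6" for idx
  proof -
    define c where "c a i = C a i $ idx" for a i
    define F where "F a t = Cf a t $ idx" for a t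
    define e where "e n = (\<Sum>a\<le>4. conv (pw Omc (5-a)) (c a) n)" for n
    define G where "G t = (\<Sum>a\<le>4. Om t ^ (5 - a) * F a t)" for t
    have Fsm: "(\<lambda>i. c a i * t ^ i) sums F a t" if "a \<le> 4" "\<bar>t\<bar> < r" for a t
      using bounded_linear.sums[OF bounded_linear_vec_nth Csm[OF that], of idx]
      by (simp add: c_def F_def mult.commute)
    have Gsm: "(\<lambda>n. e n * t ^ n) sums G t" if t: "\<bar>t\<bar> < r" for t
    proof -
      have "(\<lambda>n. \<Sum>a\<le>4. conv (pw Omc (5-a)) (c a) n * t ^ n) sums G t"
        unfolding G_def
      proof (rule sums_sum)
        fix a :: nat assume "a \<in> {..4}"
        hence a: "a \<le> 4" by simp
        show "(\<lambda>n. conv (pw Omc (5 - a)) (c a) n * t ^ n) sums (Om t ^ (5 - a) * F a t)"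
          by (rule conv_sums[where r = r and A = "\<lambda>t. Om t ^ (5 - a)"])
             (use t Fsm[OF a] pw_sums[OF Osm] in auto)
      qed
      then show ?thesis by (simp add: e_def sum_distrib_right)
    qed
    obtain K where K: "\<And>x. \<bar>x\<bar> \<le> r / 2 \<Longrightarrow> \<bar>G x - (\<Sum>n<6. e n * x ^ n)\<bar> \<le> K * \<bar>x\<bar> ^ 6"
      using powser_rem6[OF r_pos Gsm] by blast
    have ec: "e 0 = 0" "e 1 = dN C $ idx" "e 2 = eIII C (Omd Om) $ idx" "e 3 = fIID C (Omd Om) $ idx"
      "e 4 = gI C (Omd Om) $ idx" "e 5 = hI C (Omd Om) $ idx"
      unfolding e_def using coeffs5[OF w0 w1 Wd, of c]
      by (simp_all add: dN_def eIII_def fIID_def gI_def hI_def c_def)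
    have Pe: "P t $ idx = (\<Sum>n<6. e n * t ^ n)" for t
    proof -
      have s6: "\<And>f::nat\<Rightarrow>real. (\<Sum>n<6. f n) = f 0 + f 1 + f 2 + f 3 + f 4 + f 5"
        by (simp add: eval_nat_numeral)
      show ?thesis by (simp only: s6 ec) (simp add: P_def mult.commute)
    qed
    show ?thesis
    proof (intro exI allI impI)
      fix t assume t: "-(r/2) < t \<and> t < 0"
      hence "LC t = (\<Sum>a\<le>4. Om t ^ (5 - a) *\<^sub>R Cf a t)" using decomp r_pos by auto
      hence "LC t $ idx = G t" by (simp add: G_def F_def)
      moreover have "\<bar>t\<bar> \<le> r / 2" using t by auto
      ultimately show "\<bar>(LC t - P t) $ idx\<bar> \<le> K * \<bar>t\<bar> ^ 6" using K Pe by simp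
    qed
  qed
  then obtain Kf where Kf: "\<And>idx t. -(r/2) < t \<and> t < 0 \<Longrightarrow> \<bar>(LC t - P t) $ idx\<bar> \<le> Kf idx * \<bar>t\<bar> ^ 6"
    by metis
  have asym: "\<exists>K \<delta>. \<delta> > 0 \<and> (\<forall>t. -\<delta> < t \<and> t < 0 \<longrightarrow> norm (LC t - P t) \<le> K * \<bar>t\<bar> ^ 6)"
  proof (intro exI conjI allI impI)
    show "r / 2 > 0" using r_pos by simp
    fix t assume t: "-(r/2) < t \<and> t < 0"
    have "norm (LC t - P t) \<le> (\<Sum>idx\<in>UNIV. \<bar>(LC t - P t) $ idx\<bar>)" by (rule norm_le_l1_cart)
    also have "\<dots> \<le> (\<Sum>idx\<in>UNIV. Kf idx * \<bar>t\<bar> ^ 6)" by (rule sum_mono) (rule Kf[OF t])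
    also have "\<dots> = (\<Sum>idx\<in>UNIV. Kf idx) * \<bar>t\<bar> ^ 6" by (simp add: sum_distrib_right)
    finally show "norm (LC t - P t) \<le> (\<Sum>idx\<in>UNIV. Kf idx) * \<bar>t\<bar> ^ 6" .
  qed
  show ?thesis using asym weyls nps unfolding P_def by blast
qed


end
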